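(* Let $\kappa$ be of class $\mathcal{G}_2(2,0)$, $f\in C^2[0,1]$, and let $\varphi$ be the unique solution of $x-\mathcal{K}(x)=f$. If $v\in C^1[0,1]$, then $$\|(I-Q_n)\mathcal{K}_m'(\varphi)(I-Q_n)v\|_\infty=O(h^3)\quad\text{and}\quad\|\mathcal{K}_m'(\varphi)(I-Q_n)\mathcal{K}_m'(\varphi)(I-Q_n)v\|_\infty=O(h^4).$$
   Context: Setting. A kernel $\kappa:[0,1]\times[0,1]\times\mathbb{R}\to\mathbb{R}$ is of class $\mathcal{G}_2(2,0)$ if: (1) $\ell=\partial\kappa/\partial u$ is continuous on $\Psi=[0,1]^2\times\mathbb{R}$; (2) with $\Psi_1=\{0\le t\le s\le1,u\in\mathbb{R}\}$, $\Psi_2=\{0\le s\le t\le1,u\in\mathbb{R}\}$, there are $\ell_i\in C^{2}(\Psi_i)$ with $\ell=\ell_i$ on $\Psi_i$; (3) there are $\kappa_i\in C^{2}(\Psi_i)$ with $\kappa=\kappa_i$ on $\Psi_i$; (4) $\partial^2\kappa/\partial u^2$ is continuous on $\Psi$. $\mathcal{K}(x)(s)=\int_0^1\kappa(s,t,x(t))dt$ on $L^\infty[0,1]$; the solution $\varphi$ lies in $C^2[0,1]$. Quadrature: Gauss two-point rule with $w_1=w_2=1/2$, $\mu_{1,2}=\tfrac12\mp\tfrac1{2\sqrt3}$. For $n,p\in\mathbb{N}$, $m=np$, $h=1/n$, $\tilde h=1/m$, $s_i=i/m$, $\zeta_q^i=s_{i-1}+\mu_q\tilde h$. $\mathcal{K}_m'(\varphi)v(s)=\tilde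 h\sum_{i=1}^m\sum_{q=1}^2w_q\,\ell(s,\zeta_q^i,\varphi(\zeta_q^i))\,v(\zeta_q^i)$. Projection: $t_j=j/n$. For $v\in C[0,1]$, $(Q_nv)(t)=\frac1p\sum_{\nu=1}^p\sum_{q=1}^2w_qv(\zeta_q^{(j-1)p+\nu})$ for $t\in(t_{j-1},t_j]$, $j=1,\dots,n$, and $(Q_nv)(0)=(Q_nv)(t_1)$ (discrete orthogonal projection onto piecewise constants). Notation: $A=O(B)$ means $|A|\le CB$ with $C$ independent of $n,p$, for all sufficiently large $n$. *)

theory Defs
  imports "HOL-Analysis.Analysis"
begin

definition C2_on :: "('a::euclidean_space \<Rightarrow> real) \<Rightarrow> 'a set \<Rightarrow> bool" where
  "C2_on g S \<longleftrightarrow>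
     (\<exists>(g' :: 'a \<Rightarrow> 'a \<Rightarrow>\<^sub>L real) (g'' :: 'a \<Rightarrow> 'a \<Rightarrow>\<^sub>L ('a \<Rightarrow>\<^sub>L real)).
        (\<forall>x\<in>S. (g has_derivative blinfun_apply (g' x)) (at x) \<and>
                 (g' has_derivative blinfun_apply (g'' x)) (at x)) \<and>
        continuous_on S g'')"

definition C2_01 :: "(real \<Rightarrow> real) \<Rightarrow> bool" where
  "C2_01 g \<longleftrightarrow> (\<exists>g' g''. (\<forall>x\<in>{0..1}. (g has_real_derivative g' x) (at x within {0..1}) \<and>
        (g' has_real_derivative g'' x) (at x within {0..1})) \<and> continuous_on {0..1} g'')"

definition C1_01 :: "(real \<Rightarrow> real) \<Rightarrow> bool" where
  "C1_01 g \<longleftrightarrow> (\<exists>g'. (\<forall>x\<in>{0..1}. (g has_real_derivative g' x) (at x within {0..1}))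
        \<and> continuous_on {0..1} g')"

definition class_G2_2_0 ::
  "(real \<Rightarrow> real \<Rightarrow> real \<Rightarrow> real) \<Rightarrow> (real \<Rightarrow> real \<Rightarrow> real \<Rightarrow> real) \<Rightarrow> bool" where
  "class_G2_2_0 \<kappa> l \<longleftrightarrow>
     (\<forall>s\<in>{0..1}. \<forall>t\<in>{0..1}. \<forall>u. (\<kappa> s t has_real_derivative l s t u) (at u)) \<and>
     continuous_on ({0..1} \<times> {0..1} \<times> UNIV) (\<lambda>(s,t,u). l s t u) \<and>
     (\<exists>l1. C2_on l1 UNIV \<and> (\<forall>s t u. 0 \<le> t \<and> t \<le> s \<and> s \<le> 1 \<longrightarrow> l s t u = l1 (s,t,u))) \<and>
     (\<exists>l2. C2_on l2 UNIV \<and> (\<forall>s t u. 0 \<le> s \<and> s \<le> t \<and> t \<le> 1 \<longrightarrow> l s t u = l2 (s,t,u))) \<and>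
     (\<exists>k1. C2_on k1 UNIV \<and> (\<forall>s t u. 0 \<le> t \<and> t \<le> s \<and> s \<le> 1 \<longrightarrow> \<kappa> s t u = k1 (s,t,u))) \<and>
     (\<exists>k2. C2_on k2 UNIV \<and> (\<forall>s t u. 0 \<le> s \<and> s \<le> t \<and> t \<le> 1 \<longrightarrow> \<kappa> s t u = k2 (s,t,u))) \<and>
     (\<exists>lu. (\<forall>s\<in>{0..1}. \<forall>t\<in>{0..1}. \<forall>u. (l s t has_real_derivative lu s t u) (at u)) \<and>
           continuous_on ({0..1} \<times> {0..1} \<times> UNIV) (\<lambda>(s,t,u). lu s t u))"

text \<open>Gauss two-point rule.\<close>
definition gw :: "nat \<Rightarrow> real" where "gw q = 1/2"

definition gmu :: "nat \<Rightarrow> real" where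
  "gmu q = (if q = 1 then 1/2 - 1/(2 * sqrt 3) else 1/2 + 1/(2 * sqrt 3))"

definition zeta :: "nat \<Rightarrow> nat \<Rightarrow> nat \<Rightarrow> real" where
  "zeta m i q = (real (i - 1) + gmu q) / real m"

definition Kmd :: "(real \<Rightarrow> real \<Rightarrow> real \<Rightarrow> real) \<Rightarrow> (real \<Rightarrow> real) \<Rightarrow> nat
    \<Rightarrow> (real \<Rightarrow> real) \<Rightarrow> real \<Rightarrow> real" where
  "Kmd l \<phi> m v s = (1 / real m) *
     (\<Sum>i=1..m. \<Sum>q=1..2. gw q * l s (zeta m i q) (\<phi> (zeta m i q)) * v (zeta m i q))"

text \<open>Discrete orthogonal projection \<open>Q_n\<close> (m = n p). For t in (t_{j-1}, t_j] we have
  j = ceiling (n t); for t = 0 we take j = 1.\<close>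
definition Qn :: "nat \<Rightarrow> nat \<Rightarrow> (real \<Rightarrow> real) \<Rightarrow> real \<Rightarrow> real" where
  "Qn n p v t = (let j = max 1 (nat \<lceil>t * real n\<rceil>) in
     (1 / real p) * (\<Sum>\<nu>=1..p. \<Sum>q=1..2. gw q * v (zeta (n * p) ((j - 1) * p + \<nu>) q)))"

definition IQn :: "nat \<Rightarrow> nat \<Rightarrow> (real \<Rightarrow> real) \<Rightarrow> real \<Rightarrow> real" where
  "IQn n p v t = v t - Qn n p v t"

end

theory Submission
  imports Defs
begin


lemma cont_bound:
  fixes g :: "'a::metric_space \<Rightarrow> 'b::real_normed_vector"
  assumes "continuous_on K g" "compact K"
  shows "\<exists>B\<ge>0. \<forall>x\<in>K. norm (g x) \<le> B"
proof -
  have "bounded (g ` K)" using compact_continuous_image[OF assms] compact_imp_bounded by blast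
  then obtain b where "b>0" "\<forall>y\<in>g ` K. norm y \<le> b" using bounded_pos by metis
  then show ?thesis by (intro exI[of _ b]) auto
qed

lemma C2_lip:
  fixes k :: "real\<times>real\<times>real \<Rightarrow> real"
  assumes "C2_on k UNIV" "compact K" "convex K"
  shows "\<exists>D1 D2 k'. D1 \<ge> 0 \<and> D2 \<ge> 0 \<and> (\<forall>x. (k has_derivative blinfun_apply (k' x)) (at x)) \<and>
     (\<forall>x\<in>K. \<forall>y\<in>K. \<bar>k x - k y\<bar> \<le> D1 * norm (x-y) \<and> norm (k' x - k' y) \<le> D2 * norm (x-y))"
proof -
  obtain k' k'' where d: "\<And>x. (k has_derivative blinfun_apply (k' x)) (at x)"
    "\<And>x. (k' has_derivative blinfun_apply (k'' x)) (at x)" and c: "continuous_on UNIV k''"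
    using assms(1) unfolding C2_on_def by blast
  have ck': "continuous_on K k'"
    by (intro continuous_at_imp_continuous_on ballI has_derivative_continuous[OF d(2)])
  obtain D1 where D1: "D1 \<ge> 0" "\<forall>x\<in>K. norm (k' x) \<le> D1" using cont_bound[OF ck' assms(2)] by blast
  obtain D2 where D2: "D2 \<ge> 0" "\<forall>x\<in>K. norm (k'' x) \<le> D2"
    using cont_bound[OF continuous_on_subset[OF c] assms(2)] by blast
  have l1: "norm (k x - k y) \<le> D1 * norm (x-y)" if "x\<in>K" "y\<in>K" for x y
    by (rule differentiable_bound[OF assms(3) has_derivative_at_withinI[OF d(1)] _ that])
       (use D1 in \<open>auto simp: norm_blinfun.rep_eq[symmetric]\<close>)
  have l2: "norm (k' x - k' y) \<le> D2 * norm (x-y)" if "x\<in>K" "y\<in>K" for x y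
    by (rule differentiable_bound[OF assms(3) has_derivative_at_withinI[OF d(2)] _ that])
       (use D2 in \<open>auto simp: norm_blinfun.rep_eq[symmetric]\<close>)
  show ?thesis using l1 l2 D1 D2 d by (intro exI[of _ D1] exI[of _ D2] exI[of _ k']) auto
qed

lemma C1_lip:
  assumes "\<forall>x\<in>{0..1}. (g has_real_derivative g' x) (at x within {0..1::real})"
    "continuous_on {0..1} g'"
  shows "\<exists>L\<ge>0. \<forall>x\<in>{0..1}. \<forall>y\<in>{0..1}. \<bar>g x - g y\<bar> \<le> L * \<bar>x - y\<bar>"
proof -
  obtain L where L: "L \<ge> 0" "\<forall>x\<in>{0..1}. norm (g' x) \<le> L" using cont_bound[OF assms(2)] by auto
  have "norm (g x - g y) \<le> L * norm (x-y)" if "x\<in>{0..1}" "y\<in>{0..1}" for x y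
  proof (rule differentiable_bound[OF convex_real_interval(5)[of 0 1] _ _ that])
    fix z assume z: "z \<in> {0..1::real}"
    show "(g has_derivative (\<lambda>h. h * g' z)) (at z within {0..1})"
      using assms(1) z by (simp add: has_field_derivative_def mult.commute[of _ "g' z"])
    show "onorm (\<lambda>h. h * g' z) \<le> L"
      by (rule onorm_le) (use L z in \<open>auto simp: abs_mult intro: order_trans[OF mult_left_mono[of "\<bar>g' z\<bar>" L] eq_refl]\<close>)
  qed
  then show ?thesis using L by (intro exI[of _ L]) auto
qed

lemma C1_cont:
  assumes "\<forall>x\<in>{0..1}. (g has_real_derivative g' x) (at x within {0..1::real})"
  shows "continuous_on {0..1} g"
  using assms continuous_on_eq_continuous_within DERIV_continuous by blast

lemma C2_01_props:
  assumes "C2_01 g"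
  shows "\<exists>L\<ge>0. \<forall>x\<in>{0..1}. \<forall>y\<in>{0..1}. \<bar>g x - g y\<bar> \<le> L * \<bar>x - y\<bar>"
    "\<exists>B\<ge>0. \<forall>x\<in>{0..1}. \<bar>g x\<bar> \<le> B"
proof -
  obtain g' g'' where d: "\<forall>x\<in>{0..1}. (g has_real_derivative g' x) (at x within {0..1})"
    "\<forall>x\<in>{0..1}. (g' has_real_derivative g'' x) (at x within {0..1})"
    using assms unfolding C2_01_def by blast
  show "\<exists>L\<ge>0. \<forall>x\<in>{0..1}. \<forall>y\<in>{0..1}. \<bar>g x - g y\<bar> \<le> L * \<bar>x - y\<bar>"
    using C1_lip[OF d(1) C1_cont[OF d(2)]] .
  show "\<exists>B\<ge>0. \<forall>x\<in>{0..1}. \<bar>g x\<bar> \<le> B"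
    using cont_bound[OF C1_cont[OF d(1)]] by auto
qed

lemma C1_01_lip:
  assumes "C1_01 g"
  shows "\<exists>L\<ge>0. \<forall>x\<in>{0..1}. \<forall>y\<in>{0..1}. \<bar>g x - g y\<bar> \<le> L * \<bar>x - y\<bar>"
  using assms C1_lip unfolding C1_01_def by blast

lemma kAB:
  fixes k :: "real\<times>real\<times>real \<Rightarrow> real"
  assumes "C2_on k UNIV" and B: "\<forall>t\<in>{0..1}. \<bar>\<phi> t\<bar> \<le> B"
    and Lp: "Lp \<ge> 0" "\<forall>x\<in>{0..1}. \<forall>y\<in>{0..1}. \<bar>\<phi> x - \<phi> y\<bar> \<le> Lp * \<bar>x - y\<bar>"
  shows "\<exists>D\<ge>0. \<forall>s\<in>{0..1}. \<forall>t\<in>{0..1}. \<forall>t'\<in>{0..1}.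
           \<bar>k (s,t,\<phi> t) - k (s,t',\<phi> t')\<bar> \<le> D * \<bar>t - t'\<bar>"
    "\<exists>D\<ge>0. \<forall>s\<in>{0..1}. \<forall>s'\<in>{0..1}. \<forall>t\<in>{0..1}. \<forall>t'\<in>{0..1}.
           \<bar>k (s,t,\<phi> t) - k (s',t,\<phi> t) - (k (s,t',\<phi> t') - k (s',t',\<phi> t'))\<bar> \<le> D * \<bar>s - s'\<bar> * \<bar>t - t'\<bar>"
proof -
  define K where "K = {0..1::real} \<times> {0..1::real} \<times> {-B..B}"
  have K: "compact K" "convex K" unfolding K_def
    by (auto intro!: compact_Times convex_Times)
  obtain D1 D2 k' where D: "D1 \<ge> 0" "D2 \<ge> 0" "\<And>x. (k has_derivative blinfun_apply (k' x)) (at x)"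
    "\<And>x y. x\<in>K \<Longrightarrow> y\<in>K \<Longrightarrow> \<bar>k x - k y\<bar> \<le> D1 * norm (x-y) \<and> norm (k' x - k' y) \<le> D2 * norm (x-y)"
    using C2_lip[OF assms(1) K] by blast
  have inK: "(s,t,\<phi> t) \<in> K" if "s\<in>{0..1}" "t\<in>{0..1}" for s t
    using that B unfolding K_def by (force simp: abs_le_iff)
  have nd: "norm ((s,t,\<phi> t) - (s',t',\<phi> t')) \<le> \<bar>s - s'\<bar> + (1 + Lp) * \<bar>t - t'\<bar>"
    if "t\<in>{0..1}" "t'\<in>{0..1}" for s s' t t'
  proof -
    have "norm ((s,t,\<phi> t) - (s',t',\<phi> t')) \<le> norm (s-s') + norm ((t,\<phi> t) - (t',\<phi> t'))"
      using norm_Pair_le[of "s-s'" "(t,\<phi> t) - (t',\<phi> t')"] by simp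
    also have "norm ((t,\<phi> t) - (t',\<phi> t')) \<le> norm (t-t') + norm (\<phi> t - \<phi> t')"
      using norm_Pair_le[of "t-t'" "\<phi> t - \<phi> t'"] by simp
    moreover have "\<bar>\<phi> t - \<phi> t'\<bar> \<le> Lp * \<bar>t - t'\<bar>" using Lp that by blast
    ultimately show ?thesis by (simp add: algebra_simps)
  qed
  show "\<exists>D\<ge>0. \<forall>s\<in>{0..1}. \<forall>t\<in>{0..1}. \<forall>t'\<in>{0..1}.
           \<bar>k (s,t,\<phi> t) - k (s,t',\<phi> t')\<bar> \<le> D * \<bar>t - t'\<bar>"
  proof (intro exI[of _ "D1 * (1 + Lp)"] conjI ballI)
    fix s t t' :: real assume st: "s\<in>{0..1}" "t\<in>{0..1}" "t'\<in>{0..1}"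
    have "\<bar>k (s,t,\<phi> t) - k (s,t',\<phi> t')\<bar> \<le> D1 * norm ((s,t,\<phi> t) - (s,t',\<phi> t'))"
      using D(4)[OF inK inK] st by blast
    also have "\<dots> \<le> D1 * ((1 + Lp) * \<bar>t - t'\<bar>)"
      using nd[of t t' s s] st D by (intro mult_left_mono) auto
    finally show "\<bar>k (s,t,\<phi> t) - k (s,t',\<phi> t')\<bar> \<le> D1 * (1 + Lp) * \<bar>t - t'\<bar>" by simp
  qed (use D Lp in auto)
  show "\<exists>D\<ge>0. \<forall>s\<in>{0..1}. \<forall>s'\<in>{0..1}. \<forall>t\<in>{0..1}. \<forall>t'\<in>{0..1}.
           \<bar>k (s,t,\<phi> t) - k (s',t,\<phi> t) - (k (s,t',\<phi> t') - k (s',t',\<phi> t'))\<bar> \<le> D * \<bar>s - s'\<bar> * \<bar>t - t'\<bar>"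
  proof (intro exI[of _ "D2 * (1 + Lp)"] conjI ballI)
    fix s s' t t' :: real assume st: "s\<in>{0..1}" "s'\<in>{0..1}" "t\<in>{0..1}" "t'\<in>{0..1}"
    define G where "G \<sigma> = k (\<sigma>,t,\<phi> t) - k (\<sigma>,t',\<phi> t')" for \<sigma>
    define G' where "G' \<sigma> = (\<lambda>h. blinfun_apply (k' (\<sigma>,t,\<phi> t) - k' (\<sigma>,t',\<phi> t')) (h,0,0))" for \<sigma>
    have "norm (G s - G s') \<le> (D2 * (1 + Lp) * \<bar>t - t'\<bar>) * norm (s - s')"
    proof (rule differentiable_bound[OF convex_real_interval(5)[of 0 1] _ _ st(1,2)])
      fix z assume z: "z \<in> {0..1::real}"
      have p: "((\<lambda>\<sigma>. (\<sigma>, c, d)) has_derivative (\<lambda>h. (h,0,0))) (at z within {0..1})" for c d :: real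
        using has_derivative_Pair[OF has_derivative_ident has_derivative_Pair[OF has_derivative_const[of c] has_derivative_const[of d]]] by blast
      have "((\<lambda>\<sigma>. k (\<sigma>, c, d)) has_derivative (\<lambda>h. blinfun_apply (k' (z,c,d)) (h,0,0))) (at z within {0..1})" for c d :: real
        using has_derivative_compose[OF p D(3)] by (simp add: o_def)
      then show "(G has_derivative G' z) (at z within {0..1})"
        unfolding G_def G'_def by (auto intro!: derivative_eq_intros simp: blinfun.diff_left)
      show "onorm (G' z) \<le> D2 * (1 + Lp) * \<bar>t - t'\<bar>"
      proof (rule onorm_le)
        fix h :: real
        have "norm (G' z h) \<le> norm (k' (z,t,\<phi> t) - k' (z,t',\<phi> t')) * norm (h,0::real,0::real)"
          unfolding G'_def by (rule norm_blinfun)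
        also have "norm (k' (z,t,\<phi> t) - k' (z,t',\<phi> t')) \<le> D2 * norm ((z,t,\<phi> t) - (z,t',\<phi> t'))"
          using D(4)[OF inK inK] z st by blast
        also have "\<dots> \<le> D2 * ((1 + Lp) * \<bar>t - t'\<bar>)"
          using nd[of t t' z z] st D by (intro mult_left_mono) auto
        finally show "norm (G' z h) \<le> D2 * (1 + Lp) * \<bar>t - t'\<bar> * norm h"
          by (simp add: norm_Pair mult_right_mono mult.assoc)
      qed
    qed
    then show "\<bar>k (s,t,\<phi> t) - k (s',t,\<phi> t) - (k (s,t',\<phi> t') - k (s',t',\<phi> t'))\<bar> \<le> D2 * (1 + Lp) * \<bar>s - s'\<bar> * \<bar>t - t'\<bar>"
      unfolding G_def by (simp add: algebra_simps)
  qed (use D Lp in auto)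
qed



definition zn :: "nat \<Rightarrow> nat \<Rightarrow> nat \<Rightarrow> nat \<Rightarrow> nat \<Rightarrow> real" where
  "zn n p j \<nu> q = zeta (n*p) ((j-1)*p+\<nu>) q"

definition jt :: "nat \<Rightarrow> real \<Rightarrow> nat" where
  "jt n t = max 1 (nat \<lceil>t * real n\<rceil>)"

lemma gmu_bounds: "0 < gmu q \<and> gmu q < 1"
proof -
  have "1 < sqrt (3::real)" by simp
  define x where "x = 1/(2 * sqrt (3::real))"
  have "x < (1/2::real)" unfolding x_def using \<open>1 < sqrt 3\<close> by (simp add: field_simps)
  moreover have "0 < x" unfolding x_def by simp
  moreover have "gmu q = (if q = 1 then 1/2 - x else 1/2 + x)" unfolding gmu_def x_def by simp
  ultimately show ?thesis by auto
qed

lemma zn_bounds: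
  assumes "n \<ge> 1" "p \<ge> 1" "j \<ge> 1" "1 \<le> \<nu>" "\<nu> \<le> p"
  shows "real (j-1) / real n < zn n p j \<nu> q \<and> zn n p j \<nu> q < real j / real n"
proof -
  have e: "real ((j-1)*p+\<nu> - 1) = real (j-1) * real p + (real \<nu> - 1)"
    using assms by (simp add: of_nat_diff)
  have z: "zn n p j \<nu> q = (real (j-1) * real p + (real \<nu> - 1 + gmu q)) / (real n * real p)"
    unfolding zn_def zeta_def e by simp
  have g: "0 < gmu q" "gmu q < 1" using gmu_bounds by auto
  have a: "0 < real \<nu> - 1 + gmu q" "real \<nu> - 1 + gmu q < real p"
    using assms g by auto
  have j: "real j = real (j-1) + 1" using assms by (simp add: of_nat_diff)
  have np: "real n > 0" "real p > 0" using assms by auto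
  have l: "real (j-1) / real n = (real (j-1) * real p + 0) / (real n * real p)" using np by simp
  have r: "real j / real n = (real (j-1) * real p + real p) / (real n * real p)" using np
    unfolding j by (simp add: field_simps)
  have npp: "real n * real p > 0" using np by simp
  have i1: "(real (j-1) * real p + 0) / (real n * real p) < (real (j-1) * real p + (real \<nu> - 1 + gmu q)) / (real n * real p)"
    using a npp by (intro divide_strict_right_mono) auto
  have i2: "(real (j-1) * real p + (real \<nu> - 1 + gmu q)) / (real n * real p) < (real (j-1) * real p + real p) / (real n * real p)"
    using a npp by (intro divide_strict_right_mono) auto
  show ?thesis using i1 i2 unfolding z l[symmetric] r[symmetric] by blast
qed

lemma zn_in01:
  assumes "n \<ge> 1" "p \<ge> 1" "j \<ge> 1" "j \<le> n" "1 \<le> \<nu>" "\<nu> \<le> p"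
  shows "0 \<le> zn n p j \<nu> q \<and> zn n p j \<nu> q \<le> 1"
proof -
  have "0 \<le> real (j-1) / real n" by simp
  moreover have "real j / real n \<le> 1" using assms by simp
  moreover have "real (j-1) / real n < zn n p j \<nu> q \<and> zn n p j \<nu> q < real j / real n"
    using zn_bounds[OF assms(1-3,5,6), of q] .
  ultimately show ?thesis by linarith
qed

lemma zn_close:
  assumes "n \<ge> 1" "p \<ge> 1" "j \<ge> 1" "1 \<le> \<nu>" "\<nu> \<le> p" "1 \<le> \<nu>'" "\<nu>' \<le> p"
  shows "\<bar>zn n p j \<nu> q - zn n p j \<nu>' q'\<bar> \<le> 1 / real n"
proof -
  have j: "real j / real n = real (j-1) / real n + 1 / real n" using assms
    by (simp add: of_nat_diff add_divide_distrib[symmetric])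
  show ?thesis using zn_bounds[OF assms(1-5), of q] zn_bounds[OF assms(1-3,6,7), of q'] j by auto
qed

lemma jt_props:
  assumes "n \<ge> 1" "0 \<le> t" "t \<le> 1"
  shows "1 \<le> jt n t \<and> jt n t \<le> n \<and> real (jt n t - 1) / real n \<le> t \<and> t \<le> real (jt n t) / real n"
proof (cases "t = 0")
  case True then show ?thesis using assms by (simp add: jt_def)
next
  case False
  then have tp: "t * real n > 0" using assms by auto
  have c1: "\<lceil>t * real n\<rceil> \<ge> 1" using tp one_le_ceiling by blast
  have "t * real n \<le> real n" using assms by (simp add: mult_left_le_one_le)
  then have c2: "\<lceil>t * real n\<rceil> \<le> int n" by (simp add: ceiling_le_iff)
  have c1': "1 \<le> nat \<lceil>t * real n\<rceil>" using c1 by linarith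
  have jeq: "jt n t = nat \<lceil>t * real n\<rceil>" unfolding jt_def using c1' by simp
  have r: "real (jt n t) = of_int \<lceil>t * real n\<rceil>" using c1 jeq by simp
  have r1: "real (jt n t - 1) = of_int \<lceil>t * real n\<rceil> - 1" using c1 c1' jeq by (simp add: of_nat_diff)
  have "of_int \<lceil>t * real n\<rceil> - 1 < t * real n" "t * real n \<le> of_int \<lceil>t * real n\<rceil>"
    by linarith+
  then show ?thesis using c1 c2 jeq r r1 assms by (auto simp: divide_simps)
qed

lemma jt_zn:
  assumes "n \<ge> 1" "p \<ge> 1" "j \<ge> 1" "1 \<le> \<nu>" "\<nu> \<le> p"
  shows "jt n (zn n p j \<nu> q) = j"
proof -
  have b: "real (j-1) < zn n p j \<nu> q * real n" "zn n p j \<nu> q * real n < real j"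
    using zn_bounds[OF assms, of q] assms by (auto simp: divide_simps)
  have "real (j-1) = real j - 1" using assms by (simp add: of_nat_diff)
  then have "\<lceil>zn n p j \<nu> q * real n\<rceil> = int j" using b by (simp add: ceiling_eq_iff)
  then show ?thesis using assms unfolding jt_def by simp
qed

lemma Qn_eq: "Qn n p g t = (1 / real p) * (\<Sum>\<nu>=1..p. \<Sum>q=1..2. gw q * g (zn n p (jt n t) \<nu> q))"
  unfolding Qn_def zn_def jt_def Let_def by simp

lemma sum_gw[simp]: "(\<Sum>q=1..2. gw q) = 1" "(\<Sum>q=Suc 0..2. gw q) = 1"
  by (simp_all add: gw_def)

lemma sum_gw2: "(\<Sum>\<nu>=1..p. \<Sum>q=1..2. gw q) = real p"
  by (simp add: sum_gw)

lemma avg_bound: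
  assumes "p \<ge> 1" "\<And>\<nu> q. 1 \<le> \<nu> \<Longrightarrow> \<nu> \<le> p \<Longrightarrow> 1 \<le> q \<Longrightarrow> q \<le> 2 \<Longrightarrow> \<bar>X \<nu> q\<bar> \<le> E"
  shows "\<bar>(1 / real p) * (\<Sum>\<nu>=1..p. \<Sum>q=1..2. gw q * X \<nu> q)\<bar> \<le> E"
proof -
  have "\<bar>\<Sum>\<nu>=1..p. \<Sum>q=1..2. gw q * X \<nu> q\<bar> \<le> (\<Sum>\<nu>=1..p. \<Sum>q=1..2. \<bar>gw q * X \<nu> q\<bar>)"
    by (rule order_trans[OF sum_abs sum_mono]) (rule sum_abs)
  also have "\<dots> \<le> (\<Sum>\<nu>=1..p. \<Sum>q=1..2. gw q * E)"
    using assms(2) by (intro sum_mono) (auto simp: abs_mult gw_def)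
  also have "\<dots> = real p * E" by (simp add: sum_distrib_right[symmetric] sum_gw)
  finally show ?thesis using assms(1) by (simp add: abs_mult field_simps)
qed

lemma IQn_small:
  assumes "n \<ge> 1" "p \<ge> 1" "0 \<le> t" "t \<le> 1"
    and E: "\<forall>x\<in>{0..1}. \<forall>y\<in>{0..1}. \<bar>x - y\<bar> \<le> 1 / real n \<longrightarrow> \<bar>g x - g y\<bar> \<le> E"
  shows "\<bar>IQn n p g t\<bar> \<le> E"
proof -
  define j where "j = jt n t"
  have j: "1 \<le> j" "j \<le> n" "real (j - 1) / real n \<le> t" "t \<le> real j / real n"
    using jt_props[OF assms(1,3,4)] unfolding j_def by auto
  have jr: "real j / real n = real (j-1) / real n + 1 / real n" using j
    by (simp add: of_nat_diff add_divide_distrib[symmetric])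
  have "IQn n p g t = (1 / real p) * (\<Sum>\<nu>=1..p. \<Sum>q=1..2. gw q * (g t - g (zn n p j \<nu> q)))"
    unfolding IQn_def Qn_eq j_def[symmetric] using assms(2)
    by (simp add: right_diff_distrib sum_subtractf sum_distrib_right[symmetric] sum_gw
        sum_distrib_left[symmetric])
  also have "\<bar>\<dots>\<bar> \<le> E"
  proof (rule avg_bound[OF assms(2)])
    fix \<nu> q assume \<nu>: "1 \<le> \<nu>" "\<nu> \<le> p"
    have "0 \<le> zn n p j \<nu> q \<and> zn n p j \<nu> q \<le> 1" using zn_in01[OF assms(1,2) j(1,2) \<nu>] .
    moreover have "\<bar>t - zn n p j \<nu> q\<bar> \<le> 1 / real n"
      using zn_bounds[OF assms(1,2) j(1) \<nu>, of q] j jr by auto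
    ultimately show "\<bar>g t - g (zn n p j \<nu> q)\<bar> \<le> E" using E assms by auto
  qed
  finally show ?thesis .
qed

lemma IQn_block_zero:
  assumes "n \<ge> 1" "p \<ge> 1" "j \<ge> 1"
  shows "(\<Sum>\<nu>=1..p. \<Sum>q=1..2. gw q * IQn n p g (zn n p j \<nu> q)) = 0"
proof -
  define A where "A = Qn n p g (zn n p j 1 1)"
  have QA: "Qn n p g (zn n p j \<nu> q) = A" if "1 \<le> \<nu>" "\<nu> \<le> p" for \<nu> q
    unfolding A_def Qn_eq using jt_zn[OF assms that] jt_zn[OF assms order_refl assms(2)] by simp
  have "(\<Sum>\<nu>=1..p. \<Sum>q=1..2. gw q * IQn n p g (zn n p j \<nu> q))
      = (\<Sum>\<nu>=1..p. \<Sum>q=1..2. gw q * g (zn n p j \<nu> q)) - real p * A"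
    unfolding IQn_def using QA
    by (simp add: right_diff_distrib sum_subtractf sum_distrib_right[symmetric] sum_gw)
  also have "(\<Sum>\<nu>=1..p. \<Sum>q=1..2. gw q * g (zn n p j \<nu> q)) = real p * A"
    unfolding A_def Qn_eq jt_zn[OF assms order_refl assms(2)] using assms(2) by simp
  finally show ?thesis by simp
qed

lemma sum_blocks: "(\<Sum>i=1..n*p::nat. F i) = (\<Sum>j=1..n. \<Sum>\<nu>=1..p. F ((j-1)*p+\<nu>))"
proof (induction n)
  case 0 then show ?case by simp
next
  case (Suc n)
  have "(\<Sum>i=1..Suc n*p. F i) = (\<Sum>i=1..n*p + p. F i)" by (simp add: add.commute)
  also have "\<dots> = (\<Sum>i=1..n*p. F i) + (\<Sum>i=n*p+1..n*p+p. F i)"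
    by (rule sum.ub_add_nat) simp
  also have "(\<Sum>i=n*p+1..n*p+p. F i) = (\<Sum>\<nu>=1..p. F (n*p+\<nu>))"
    using sum.shift_bounds_cl_nat_ivl[of F 1 "n*p" p] by (simp add: add.commute)
  finally show ?case using Suc by simp
qed

lemma Kmd_blocks:
  "Kmd l \<phi> (n*p) w s = (1 / (real n * real p)) *
     (\<Sum>j=1..n. \<Sum>\<nu>=1..p. \<Sum>q=1..2. gw q * l s (zn n p j \<nu> q) (\<phi> (zn n p j \<nu> q)) * w (zn n p j \<nu> q))"
  unfolding Kmd_def zn_def by (subst sum_blocks) simp



lemma blk:
  assumes np: "n \<ge> 1" "p \<ge> 1"
   and Z: "\<forall>j\<in>{1..n}. (\<Sum>\<nu>=1..p. \<Sum>q=1..2. gw q * w (zn n p j \<nu> q)) = 0"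
   and W: "\<forall>j\<in>{1..n}. \<forall>\<nu>\<in>{1..p}. \<forall>q\<in>{1..2}. \<bar>w (zn n p j \<nu> q)\<bar> \<le> W"
   and M: "\<forall>j\<in>{1..n}. \<forall>\<nu>\<in>{1..p}. \<forall>q\<in>{1..2}. \<bar>a (zn n p j \<nu> q) - a (zn n p j 1 1)\<bar> \<le> M j"
  shows "\<bar>(1 / (real n * real p)) * (\<Sum>j=1..n. \<Sum>\<nu>=1..p. \<Sum>q=1..2. gw q * a (zn n p j \<nu> q) * w (zn n p j \<nu> q))\<bar>
          \<le> (1 / real n) * (\<Sum>j=1..n. M j) * W"
proof -
  have bj: "\<bar>\<Sum>\<nu>=1..p. \<Sum>q=1..2. gw q * a (zn n p j \<nu> q) * w (zn n p j \<nu> q)\<bar> \<le> real p * M j * W"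
    if j: "j \<in> {1..n}" for j
  proof -
    define c where "c = a (zn n p j 1 1)"
    have "(\<Sum>\<nu>=1..p. \<Sum>q=1..2. gw q * (a (zn n p j \<nu> q) - c) * w (zn n p j \<nu> q))
        = (\<Sum>\<nu>=1..p. \<Sum>q=1..2. gw q * a (zn n p j \<nu> q) * w (zn n p j \<nu> q))
          - c * (\<Sum>\<nu>=1..p. \<Sum>q=1..2. gw q * w (zn n p j \<nu> q))"
      by (simp add: algebra_simps sum_subtractf sum_distrib_left)
    also have "(\<Sum>\<nu>=1..p. \<Sum>q=1..2. gw q * w (zn n p j \<nu> q)) = 0" using Z j by blast
    finally have eq: "(\<Sum>\<nu>=1..p. \<Sum>q=1..2. gw q * a (zn n p j \<nu> q) * w (zn n p j \<nu> q))
       = (\<Sum>\<nu>=1..p. \<Sum>q=1..2. gw q * (a (zn n p j \<nu> q) - c) * w (zn n p j \<nu> q))" by simp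
    have "\<bar>\<Sum>\<nu>=1..p. \<Sum>q=1..2. gw q * (a (zn n p j \<nu> q) - c) * w (zn n p j \<nu> q)\<bar>
        \<le> (\<Sum>\<nu>=1..p. \<Sum>q=1..2. \<bar>gw q * (a (zn n p j \<nu> q) - c) * w (zn n p j \<nu> q)\<bar>)"
      by (rule order_trans[OF sum_abs sum_mono]) (rule sum_abs)
    also have "\<dots> \<le> (\<Sum>\<nu>=1..p. \<Sum>q=1..2. gw q * (M j * W))"
    proof (intro sum_mono)
      fix \<nu> q assume "\<nu> \<in> {1..p}" "q \<in> {1..2::nat}"
      then have m: "\<bar>a (zn n p j \<nu> q) - c\<bar> \<le> M j" and w: "\<bar>w (zn n p j \<nu> q)\<bar> \<le> W"
        using M W j unfolding c_def by auto
      have "\<bar>a (zn n p j \<nu> q) - c\<bar> * \<bar>w (zn n p j \<nu> q)\<bar> \<le> M j * W"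
        by (rule mult_mono[OF m w]) (use m in auto)
      then show "\<bar>gw q * (a (zn n p j \<nu> q) - c) * w (zn n p j \<nu> q)\<bar> \<le> gw q * (M j * W)"
        by (simp add: abs_mult gw_def)
    qed
    also have "\<dots> = real p * M j * W" by (simp add: sum_distrib_right[symmetric])
    finally show ?thesis using eq by simp
  qed
  have "\<bar>\<Sum>j=1..n. \<Sum>\<nu>=1..p. \<Sum>q=1..2. gw q * a (zn n p j \<nu> q) * w (zn n p j \<nu> q)\<bar>
      \<le> (\<Sum>j=1..n. real p * M j * W)"
    by (rule order_trans[OF sum_abs sum_mono]) (use bj in auto)
  also have "\<dots> = real p * (\<Sum>j=1..n. M j) * W" by (simp add: sum_distrib_left sum_distrib_right algebra_simps)
  finally have "\<bar>\<Sum>j=1..n. \<Sum>\<nu>=1..p. \<Sum>q=1..2. gw q * a (zn n p j \<nu> q) * w (zn n p j \<nu> q)\<bar>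
      \<le> real p * (\<Sum>j=1..n. M j) * W" .
  then have "(1 / (real n * real p)) * \<bar>\<Sum>j=1..n. \<Sum>\<nu>=1..p. \<Sum>q=1..2. gw q * a (zn n p j \<nu> q) * w (zn n p j \<nu> q)\<bar>
      \<le> (1 / (real n * real p)) * (real p * (\<Sum>j=1..n. M j) * W)"
    by (rule mult_left_mono) simp
  then show ?thesis using np by (simp add: abs_mult)
qed

lemma near_card:
  assumes "0 \<le> a" "a \<le> b" "b - a \<le> 1 / real n" "n \<ge> 1"
  shows "card {j\<in>{1..n}. real j / real n > a \<and> real (j-1) / real n < b} \<le> 2"
proof -
  define f where "f = nat \<lfloor>real n * a\<rfloor>"
  have sub: "{j\<in>{1..n}. real j / real n > a \<and> real (j-1) / real n < b} \<subseteq> {f+1, f+2}"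
  proof
    fix j assume "j \<in> {j\<in>{1..n}. real j / real n > a \<and> real (j-1) / real n < b}"
    then have j: "1 \<le> j" "real j / real n > a" "real (j-1) / real n < b" by auto
    have np: "real n > 0" using assms by simp
    have j1: "real j > real n * a" using j(2) np by (simp add: field_simps)
    have "real (j-1) < real n * b" using j(3) np by (simp add: field_simps)
    moreover have "real n * b \<le> real n * a + 1"
      using assms np by (simp add: field_simps)
    ultimately have j2: "real j < real n * a + 2" using j(1) by (simp add: of_nat_diff)
    have fa: "real f \<le> real n * a" "real n * a < real f + 1" unfolding f_def using assms np
      by (simp_all add: of_nat_nat)
    have "real f < real j" "real j < real f + 3" using j1 j2 fa by linarith+
    then have "f < j" "j < f + 3" by linarith+
    then show "j \<in> {f+1, f+2}" by auto
  qed
  have "card {j\<in>{1..n}. real j / real n > a \<and> real (j-1) / real n < b} \<le> card {f+1, f+2}"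
    by (rule card_mono[OF _ sub]) simp
  also have "\<dots> \<le> 2" by (simp add: card_insert_if)
  finally show ?thesis .
qed



lemma L_props:
  assumes kernel: "class_G2_2_0 \<kappa> l" and B: "\<forall>t\<in>{0..1}. \<bar>\<phi> t\<bar> \<le> B"
    and Lp: "Lp \<ge> 0" "\<forall>x\<in>{0..1}. \<forall>y\<in>{0..1}. \<bar>\<phi> x - \<phi> y\<bar> \<le> Lp * \<bar>x - y\<bar>"
  shows "\<exists>Lt\<ge>0. \<forall>s\<in>{0..1}. \<forall>t\<in>{0..1}. \<forall>t'\<in>{0..1}. \<bar>l s t (\<phi> t) - l s t' (\<phi> t')\<bar> \<le> Lt * \<bar>t - t'\<bar>"
    "\<exists>CB\<ge>0. \<forall>s\<in>{0..1}. \<forall>s'\<in>{0..1}. \<forall>t\<in>{0..1}. \<forall>t'\<in>{0..1}.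
        ((t \<le> s \<and> t \<le> s' \<and> t' \<le> s \<and> t' \<le> s') \<or> (s \<le> t \<and> s' \<le> t \<and> s \<le> t' \<and> s' \<le> t')) \<longrightarrow>
        \<bar>l s t (\<phi> t) - l s' t (\<phi> t) - (l s t' (\<phi> t') - l s' t' (\<phi> t'))\<bar> \<le> CB * \<bar>s - s'\<bar> * \<bar>t - t'\<bar>"
proof -
  have ex1: "\<exists>l1. C2_on l1 UNIV \<and> (\<forall>s t u. 0 \<le> t \<and> t \<le> s \<and> s \<le> 1 \<longrightarrow> l s t u = l1 (s,t,u))"
    using kernel unfolding class_G2_2_0_def by (elim conjE)
  have ex2: "\<exists>l2. C2_on l2 UNIV \<and> (\<forall>s t u. 0 \<le> s \<and> s \<le> t \<and> t \<le> 1 \<longrightarrow> l s t u = l2 (s,t,u))"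
    using kernel unfolding class_G2_2_0_def by (elim conjE)
  obtain l1 where l1': "C2_on l1 UNIV" "\<forall>s t u. 0 \<le> t \<and> t \<le> s \<and> s \<le> 1 \<longrightarrow> l s t u = l1 (s,t,u)"
    using ex1 by (elim exE conjE)
  obtain l2 where l2': "C2_on l2 UNIV" "\<forall>s t u. 0 \<le> s \<and> s \<le> t \<and> t \<le> 1 \<longrightarrow> l s t u = l2 (s,t,u)"
    using ex2 by (elim exE conjE)
  have l1: "C2_on l1 UNIV" "\<And>s t u. 0 \<le> t \<Longrightarrow> t \<le> s \<Longrightarrow> s \<le> 1 \<Longrightarrow> l s t u = l1 (s,t,u)"
    using l1' by auto
  have l2: "C2_on l2 UNIV" "\<And>s t u. 0 \<le> s \<Longrightarrow> s \<le> t \<Longrightarrow> t \<le> 1 \<Longrightarrow> l s t u = l2 (s,t,u)"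
    using l2' by auto
  obtain D1 where D1: "D1 \<ge> 0" "\<forall>s\<in>{0..1}. \<forall>t\<in>{0..1}. \<forall>t'\<in>{0..1}.
           \<bar>l1 (s,t,\<phi> t) - l1 (s,t',\<phi> t')\<bar> \<le> D1 * \<bar>t - t'\<bar>"
    using kAB(1)[OF l1(1) B Lp] by blast
  obtain D2 where D2: "D2 \<ge> 0" "\<forall>s\<in>{0..1}. \<forall>t\<in>{0..1}. \<forall>t'\<in>{0..1}.
           \<bar>l2 (s,t,\<phi> t) - l2 (s,t',\<phi> t')\<bar> \<le> D2 * \<bar>t - t'\<bar>"
    using kAB(1)[OF l2(1) B Lp] by blast
  obtain E1 where E1: "E1 \<ge> 0" "\<forall>s\<in>{0..1}. \<forall>s'\<in>{0..1}. \<forall>t\<in>{0..1}. \<forall>t'\<in>{0..1}.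
           \<bar>l1 (s,t,\<phi> t) - l1 (s',t,\<phi> t) - (l1 (s,t',\<phi> t') - l1 (s',t',\<phi> t'))\<bar> \<le> E1 * \<bar>s - s'\<bar> * \<bar>t - t'\<bar>"
    using kAB(2)[OF l1(1) B Lp] by blast
  obtain E2 where E2: "E2 \<ge> 0" "\<forall>s\<in>{0..1}. \<forall>s'\<in>{0..1}. \<forall>t\<in>{0..1}. \<forall>t'\<in>{0..1}.
           \<bar>l2 (s,t,\<phi> t) - l2 (s',t,\<phi> t) - (l2 (s,t',\<phi> t') - l2 (s',t',\<phi> t'))\<bar> \<le> E2 * \<bar>s - s'\<bar> * \<bar>t - t'\<bar>"
    using kAB(2)[OF l2(1) B Lp] by blast
  have same1: "\<bar>l s t (\<phi> t) - l s t' (\<phi> t')\<bar> \<le> (D1 + D2) * \<bar>t - t'\<bar>"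
    if "s\<in>{0..1}" "t\<in>{0..1}" "t'\<in>{0..1}" "t \<le> s" "t' \<le> s" for s t t'
  proof -
    have "\<bar>l s t (\<phi> t) - l s t' (\<phi> t')\<bar> \<le> D1 * \<bar>t - t'\<bar>" using that D1 l1(2)[of t s] l1(2)[of t' s] by auto
    also have "\<dots> \<le> (D1 + D2) * \<bar>t - t'\<bar>" using D2 by (simp add: mult_right_mono)
    finally show ?thesis .
  qed
  have same2: "\<bar>l s t (\<phi> t) - l s t' (\<phi> t')\<bar> \<le> (D1 + D2) * \<bar>t - t'\<bar>"
    if "s\<in>{0..1}" "t\<in>{0..1}" "t'\<in>{0..1}" "s \<le> t" "s \<le> t'" for s t t'
  proof -
    have "\<bar>l s t (\<phi> t) - l s t' (\<phi> t')\<bar> \<le> D2 * \<bar>t - t'\<bar>" using that D2 l2(2)[of s t] l2(2)[of s t'] by auto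
    also have "\<dots> \<le> (D1 + D2) * \<bar>t - t'\<bar>" using D1 by (simp add: mult_right_mono)
    finally show ?thesis .
  qed
  have cross: "\<bar>l s t (\<phi> t) - l s t' (\<phi> t')\<bar> \<le> (D1 + D2) * \<bar>t - t'\<bar>"
    if "s\<in>{0..1}" "t\<in>{0..1}" "t'\<in>{0..1}" "t \<le> s" "s \<le> t'" for s t t'
  proof -
    have "\<bar>l s t (\<phi> t) - l s s (\<phi> s)\<bar> \<le> D1 * \<bar>t - s\<bar>" using that D1(2)[rule_format, of s t s] l1(2)[of t s] l1(2)[of s s] by auto
    moreover have "\<bar>l s s (\<phi> s) - l s t' (\<phi> t')\<bar> \<le> D2 * \<bar>s - t'\<bar>" using that D2(2)[rule_format, of s s t'] l2(2)[of s s] l2(2)[of s t'] by auto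
    moreover have "D1 * \<bar>t - s\<bar> \<le> D1 * \<bar>t - t'\<bar>" "D2 * \<bar>s - t'\<bar> \<le> D2 * \<bar>t - t'\<bar>"
      using that D1 D2 by (auto intro!: mult_left_mono)
    ultimately show ?thesis by (simp add: algebra_simps) linarith
  qed
  show "\<exists>Lt\<ge>0. \<forall>s\<in>{0..1}. \<forall>t\<in>{0..1}. \<forall>t'\<in>{0..1}. \<bar>l s t (\<phi> t) - l s t' (\<phi> t')\<bar> \<le> Lt * \<bar>t - t'\<bar>"
  proof (intro exI[of _ "D1 + D2"] conjI ballI)
    fix s t t' :: real assume st: "s\<in>{0..1}" "t\<in>{0..1}" "t'\<in>{0..1}"
    consider "t \<le> s" "t' \<le> s" | "s \<le> t" "s \<le> t'" | "t \<le> s" "s \<le> t'" | "t' \<le> s" "s \<le> t" by linarith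
    then show "\<bar>l s t (\<phi> t) - l s t' (\<phi> t')\<bar> \<le> (D1 + D2) * \<bar>t - t'\<bar>"
    proof cases
      case 4
      then show ?thesis using cross[OF st(1,3,2)] by (simp add: abs_minus_commute)
    qed (use same1 same2 cross st in auto)
  qed (use D1 D2 in auto)
  show "\<exists>CB\<ge>0. \<forall>s\<in>{0..1}. \<forall>s'\<in>{0..1}. \<forall>t\<in>{0..1}. \<forall>t'\<in>{0..1}.
        ((t \<le> s \<and> t \<le> s' \<and> t' \<le> s \<and> t' \<le> s') \<or> (s \<le> t \<and> s' \<le> t \<and> s \<le> t' \<and> s' \<le> t')) \<longrightarrow>
        \<bar>l s t (\<phi> t) - l s' t (\<phi> t) - (l s t' (\<phi> t') - l s' t' (\<phi> t'))\<bar> \<le> CB * \<bar>s - s'\<bar> * \<bar>t - t'\<bar>"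
  proof (intro exI[of _ "E1 + E2"] conjI ballI impI)
    fix s s' t t' :: real assume st: "s\<in>{0..1}" "s'\<in>{0..1}" "t\<in>{0..1}" "t'\<in>{0..1}"
      and r: "(t \<le> s \<and> t \<le> s' \<and> t' \<le> s \<and> t' \<le> s') \<or> (s \<le> t \<and> s' \<le> t \<and> s \<le> t' \<and> s' \<le> t')"
    have m1: "E1 * \<bar>s - s'\<bar> * \<bar>t - t'\<bar> \<le> (E1 + E2) * \<bar>s - s'\<bar> * \<bar>t - t'\<bar>"
      using E2 by (intro mult_right_mono) auto
    have m2: "E2 * \<bar>s - s'\<bar> * \<bar>t - t'\<bar> \<le> (E1 + E2) * \<bar>s - s'\<bar> * \<bar>t - t'\<bar>"
      using E1 by (intro mult_right_mono) auto
    from r show "\<bar>l s t (\<phi> t) - l s' t (\<phi> t) - (l s t' (\<phi> t') - l s' t' (\<phi> t'))\<bar> \<le> (E1 + E2) * \<bar>s - s'\<bar> * \<bar>t - t'\<bar>"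
    proof
      assume "t \<le> s \<and> t \<le> s' \<and> t' \<le> s \<and> t' \<le> s'"
      then show ?thesis using st E1(2)[rule_format, of s s' t t'] m1 l1(2)[of t s] l1(2)[of t s'] l1(2)[of t' s] l1(2)[of t' s']
        by auto
    next
      assume "s \<le> t \<and> s' \<le> t \<and> s \<le> t' \<and> s' \<le> t'"
      then show ?thesis using st E2(2)[rule_format, of s s' t t'] m2 l2(2)[of s t] l2(2)[of s' t] l2(2)[of s t'] l2(2)[of s' t']
        by auto
    qed
  qed (use E1 E2 in auto)
qed



lemma Kmd_diff:
  "Kmd l \<phi> (n*p) w x - Kmd l \<phi> (n*p) w y = (1 / (real n * real p)) *
     (\<Sum>j=1..n. \<Sum>\<nu>=1..p. \<Sum>q=1..2. gw q * (l x (zn n p j \<nu> q) (\<phi> (zn n p j \<nu> q)) - l y (zn n p j \<nu> q) (\<phi> (zn n p j \<nu> q))) * w (zn n p j \<nu> q))"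
  unfolding Kmd_blocks right_diff_distrib[symmetric] sum_subtractf[symmetric]
  by (simp add: algebra_simps)

lemma part2_core:
  assumes np: "n \<ge> 1" "p \<ge> 1" and Lt: "Lt \<ge> 0"
    "\<forall>s\<in>{0..1}. \<forall>t\<in>{0..1}. \<forall>t'\<in>{0..1}. \<bar>l s t (\<phi> t) - l s t' (\<phi> t')\<bar> \<le> Lt * \<bar>t - t'\<bar>"
    and E: "\<forall>x\<in>{0..1}. \<forall>y\<in>{0..1}. \<bar>x - y\<bar> \<le> 1 / real n \<longrightarrow> \<bar>g x - g y\<bar> \<le> E"
    and s: "s \<in> {0..1}"
  shows "\<bar>Kmd l \<phi> (n*p) (IQn n p g) s\<bar> \<le> Lt * E * (1 / real n)"
proof -
  have "\<bar>Kmd l \<phi> (n*p) (IQn n p g) s\<bar> \<le> (1 / real n) * (\<Sum>j=1..n. Lt / real n) * E"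
    unfolding Kmd_blocks
  proof (rule blk[OF np])
    show "\<forall>j\<in>{1..n}. (\<Sum>\<nu>=1..p. \<Sum>q=1..2. gw q * IQn n p g (zn n p j \<nu> q)) = 0"
      using IQn_block_zero[OF np] by auto
    show "\<forall>j\<in>{1..n}. \<forall>\<nu>\<in>{1..p}. \<forall>q\<in>{1..2}. \<bar>IQn n p g (zn n p j \<nu> q)\<bar> \<le> E"
      using IQn_small[OF np _ _ E] zn_in01[OF np] by auto
    show "\<forall>j\<in>{1..n}. \<forall>\<nu>\<in>{1..p}. \<forall>q\<in>{1..2}. \<bar>l s (zn n p j \<nu> q) (\<phi> (zn n p j \<nu> q)) - l s (zn n p j 1 1) (\<phi> (zn n p j 1 1))\<bar> \<le> Lt / real n"
    proof (intro ballI)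
      fix j \<nu> q assume j: "j \<in> {1..n}" and \<nu>: "\<nu> \<in> {1..p}" and q: "q \<in> {1..2::nat}"
      have z: "zn n p j \<nu> q \<in> {0..1}" "zn n p j 1 1 \<in> {0..1}"
        using zn_in01[OF np, of j \<nu> q] zn_in01[OF np, of j 1 1] j \<nu> np by auto
      have c: "\<bar>zn n p j \<nu> q - zn n p j 1 1\<bar> \<le> 1 / real n"
        using zn_close[OF np, of j \<nu> 1 q 1] j \<nu> np by auto
      have "\<bar>l s (zn n p j \<nu> q) (\<phi> (zn n p j \<nu> q)) - l s (zn n p j 1 1) (\<phi> (zn n p j 1 1))\<bar>
          \<le> Lt * \<bar>zn n p j \<nu> q - zn n p j 1 1\<bar>" using Lt(2) s z by blast
      also have "\<dots> \<le> Lt * (1 / real n)" using c Lt(1) by (rule mult_left_mono)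
      finally show "\<bar>l s (zn n p j \<nu> q) (\<phi> (zn n p j \<nu> q)) - l s (zn n p j 1 1) (\<phi> (zn n p j 1 1))\<bar> \<le> Lt / real n"
        by simp
    qed
  qed
  also have "\<dots> = Lt * E * (1 / real n)" using np by simp
  finally show ?thesis .
qed

lemma part1_core:
  assumes np: "n \<ge> 1" "p \<ge> 1"
    and Lv: "Lv \<ge> 0" "\<forall>x\<in>{0..1}. \<forall>y\<in>{0..1}. \<bar>v x - v y\<bar> \<le> Lv * \<bar>x - y\<bar>"
    and Lt: "Lt \<ge> 0"
    "\<forall>s\<in>{0..1}. \<forall>t\<in>{0..1}. \<forall>t'\<in>{0..1}. \<bar>l s t (\<phi> t) - l s t' (\<phi> t')\<bar> \<le> Lt * \<bar>t - t'\<bar>"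
    and CB: "CB \<ge> 0" "\<forall>s\<in>{0..1}. \<forall>s'\<in>{0..1}. \<forall>t\<in>{0..1}. \<forall>t'\<in>{0..1}.
        ((t \<le> s \<and> t \<le> s' \<and> t' \<le> s \<and> t' \<le> s') \<or> (s \<le> t \<and> s' \<le> t \<and> s \<le> t' \<and> s' \<le> t')) \<longrightarrow>
        \<bar>l s t (\<phi> t) - l s' t (\<phi> t) - (l s t' (\<phi> t') - l s' t' (\<phi> t'))\<bar> \<le> CB * \<bar>s - s'\<bar> * \<bar>t - t'\<bar>"
    and xy: "x \<in> {0..1}" "y \<in> {0..1}" "\<bar>x - y\<bar> \<le> 1 / real n"
  shows "\<bar>Kmd l \<phi> (n*p) (IQn n p v) x - Kmd l \<phi> (n*p) (IQn n p v) y\<bar> \<le> (CB + 4 * Lt) * Lv * (1 / real n) ^ 3"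
proof -
  define near where "near j = (real j / real n > min x y \<and> real (j-1) / real n < max x y)" for j :: nat
  define M where "M j = CB * (1 / real n)^2 + (if near j then 2 * Lt / real n else 0)" for j
  have npos: "real n > 0" using np by simp
  have Wb: "\<bar>IQn n p v \<tau>\<bar> \<le> Lv / real n" if "\<tau> \<in> {0..1}" for \<tau>
  proof (rule IQn_small[OF np])
    show "\<forall>x\<in>{0..1}. \<forall>y\<in>{0..1}. \<bar>x - y\<bar> \<le> 1 / real n \<longrightarrow> \<bar>v x - v y\<bar> \<le> Lv / real n"
    proof (intro ballI impI)
      fix a b :: real assume ab: "a \<in> {0..1}" "b \<in> {0..1}" "\<bar>a - b\<bar> \<le> 1 / real n"
      have "\<bar>v a - v b\<bar> \<le> Lv * \<bar>a - b\<bar>" using Lv ab by blast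
      also have "\<dots> \<le> Lv * (1 / real n)" using ab(3) Lv(1) by (rule mult_left_mono)
      finally show "\<bar>v a - v b\<bar> \<le> Lv / real n" by simp
    qed
  qed (use that in auto)
  have "\<bar>Kmd l \<phi> (n*p) (IQn n p v) x - Kmd l \<phi> (n*p) (IQn n p v) y\<bar> \<le> (1 / real n) * (\<Sum>j=1..n. M j) * (Lv / real n)"
    unfolding Kmd_diff
  proof (rule blk[OF np])
    show "\<forall>j\<in>{1..n}. (\<Sum>\<nu>=1..p. \<Sum>q=1..2. gw q * IQn n p v (zn n p j \<nu> q)) = 0"
      using IQn_block_zero[OF np] by auto
    show "\<forall>j\<in>{1..n}. \<forall>\<nu>\<in>{1..p}. \<forall>q\<in>{1..2}. \<bar>IQn n p v (zn n p j \<nu> q)\<bar> \<le> Lv / real n"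
      using Wb zn_in01[OF np] by auto
    show "\<forall>j\<in>{1..n}. \<forall>\<nu>\<in>{1..p}. \<forall>q\<in>{1..2}. \<bar>(l x (zn n p j \<nu> q) (\<phi> (zn n p j \<nu> q)) - l y (zn n p j \<nu> q) (\<phi> (zn n p j \<nu> q)))
        - (l x (zn n p j 1 1) (\<phi> (zn n p j 1 1)) - l y (zn n p j 1 1) (\<phi> (zn n p j 1 1)))\<bar> \<le> M j"
    proof (intro ballI)
      fix j \<nu> q assume j: "j \<in> {1..n}" and \<nu>: "\<nu> \<in> {1..p}" and q: "q \<in> {1..2::nat}"
      define z where "z = zn n p j \<nu> q"
      define c where "c = zn n p j 1 1"
      have z01: "z \<in> {0..1}" "c \<in> {0..1}"
        using zn_in01[OF np, of j \<nu> q] zn_in01[OF np, of j 1 1] j \<nu> np unfolding z_def c_def by auto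
      have zc: "\<bar>z - c\<bar> \<le> 1 / real n"
        using zn_close[OF np, of j \<nu> 1 q 1] j \<nu> np unfolding z_def c_def by auto
      have zb: "real (j-1) / real n < z" "z < real j / real n" "real (j-1) / real n < c" "c < real j / real n"
        using zn_bounds[OF np, of j \<nu> q] zn_bounds[OF np, of j 1 1] j \<nu> np unfolding z_def c_def by auto
      have M0: "0 \<le> CB * (1 / real n)^2" using CB by simp
      show "\<bar>(l x z (\<phi> z) - l y z (\<phi> z)) - (l x c (\<phi> c) - l y c (\<phi> c))\<bar> \<le> M j"
      proof (cases "near j")
        case True
        have "\<bar>l x z (\<phi> z) - l x c (\<phi> c)\<bar> \<le> Lt * \<bar>z - c\<bar>" using Lt(2) xy z01 by blast
        moreover have "\<bar>l y z (\<phi> z) - l y c (\<phi> c)\<bar> \<le> Lt * \<bar>z - c\<bar>" using Lt(2) xy z01 by blast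
        moreover have "Lt * \<bar>z - c\<bar> \<le> Lt * (1 / real n)" using zc Lt(1) by (rule mult_left_mono)
        ultimately have "\<bar>(l x z (\<phi> z) - l y z (\<phi> z)) - (l x c (\<phi> c) - l y c (\<phi> c))\<bar> \<le> 2 * Lt / real n"
          by (simp add: abs_le_iff)
        then show ?thesis unfolding M_def using True M0 by simp
      next
        case False
        then have reg: "(z \<le> x \<and> z \<le> y \<and> c \<le> x \<and> c \<le> y) \<or> (x \<le> z \<and> y \<le> z \<and> x \<le> c \<and> y \<le> c)"
          unfolding near_def using zb by (auto simp: min_def max_def split: if_splits)
        have "\<bar>l x z (\<phi> z) - l y z (\<phi> z) - (l x c (\<phi> c) - l y c (\<phi> c))\<bar> \<le> CB * \<bar>x - y\<bar> * \<bar>z - c\<bar>"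
          using CB(2) xy z01 reg by blast
        also have "\<dots> \<le> CB * (1 / real n) * (1 / real n)"
          using CB(1) xy(3) zc by (intro mult_mono) (auto intro: mult_left_mono)
        finally show ?thesis unfolding M_def using False by (simp add: power2_eq_square)
      qed
    qed
  qed
  also have "(\<Sum>j=1..n. M j) \<le> CB * (1 / real n) + 4 * Lt / real n"
  proof -
    have "(\<Sum>j=1..n. M j) = real n * (CB * (1 / real n)^2) + (\<Sum>j=1..n. if near j then 2 * Lt / real n else 0)"
      unfolding M_def by (simp add: sum.distrib)
    also have "real n * (CB * (1 / real n)^2) = CB * (1 / real n)" using npos by (simp add: power2_eq_square)
    also have "(\<Sum>j=1..n. if near j then 2 * Lt / real n else 0) = (\<Sum>j\<in>{j\<in>{1..n}. near j}. 2 * Lt / real n)"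
      by (rule sum.inter_filter[symmetric]) simp
    also have "\<dots> = real (card {j\<in>{1..n}. near j}) * (2 * Lt / real n)" by simp
    also have "\<dots> \<le> 2 * (2 * Lt / real n)"
    proof (rule mult_right_mono)
      have "card {j\<in>{1..n}. near j} \<le> 2"
        unfolding near_def using near_card[of "min x y" "max x y" n] xy np
        by (auto simp: min_def max_def abs_if split: if_splits)
      then show "real (card {j\<in>{1..n}. near j}) \<le> 2" by simp
    qed (use Lt npos in simp)
    finally show ?thesis by simp
  qed
  then have "(1 / real n) * (\<Sum>j=1..n. M j) * (Lv / real n) \<le> (1 / real n) * (CB * (1 / real n) + 4 * Lt / real n) * (Lv / real n)"
    using npos Lv(1) by (intro mult_right_mono mult_left_mono) auto
  also have "\<dots> = (CB + 4 * Lt) * Lv * (1 / real n) ^ 3"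
    using npos by (simp add: field_simps power3_eq_cube)
  finally show ?thesis by simp
qed



theorem proposition4p1:
  fixes \<kappa> l :: "real \<Rightarrow> real \<Rightarrow> real \<Rightarrow> real"
    and f \<phi> v :: "real \<Rightarrow> real"
  assumes kernel: "class_G2_2_0 \<kappa> l"
    and f_C2: "C2_01 f"
    and phi_C2: "C2_01 \<phi>"
    and phi_sol: "\<forall>s\<in>{0..1}. \<phi> s - integral {0..1} (\<lambda>t. \<kappa> s t (\<phi> t)) = f s"
    and phi_unique: "\<forall>x. continuous_on {0..1} x \<and>
        (\<forall>s\<in>{0..1}. x s - integral {0..1} (\<lambda>t. \<kappa> s t (x t)) = f s) \<longrightarrow>
        (\<forall>s\<in>{0..1}. x s = \<phi> s)"
    and v_C1: "C1_01 v"
  shows "(\<exists>C N. \<forall>n\<ge>N. \<forall>p\<ge>1. \<forall>s\<in>{0..1}.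
            \<bar>IQn n p (Kmd l \<phi> (n * p) (IQn n p v)) s\<bar> \<le> C * (1 / real n) ^ 3)
       \<and> (\<exists>C N. \<forall>n\<ge>N. \<forall>p\<ge>1. \<forall>s\<in>{0..1}.
            \<bar>Kmd l \<phi> (n * p) (IQn n p (Kmd l \<phi> (n * p) (IQn n p v))) s\<bar> \<le> C * (1 / real n) ^ 4)"
proof -
  obtain Lp where Lp: "Lp \<ge> 0" "\<forall>x\<in>{0..1}. \<forall>y\<in>{0..1}. \<bar>\<phi> x - \<phi> y\<bar> \<le> Lp * \<bar>x - y\<bar>"
    using C2_01_props(1)[OF phi_C2] by blast
  obtain B where B: "\<forall>t\<in>{0..1}. \<bar>\<phi> t\<bar> \<le> B"
    using C2_01_props(2)[OF phi_C2] by blast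
  obtain Lv where Lv: "Lv \<ge> 0" "\<forall>x\<in>{0..1}. \<forall>y\<in>{0..1}. \<bar>v x - v y\<bar> \<le> Lv * \<bar>x - y\<bar>"
    using C1_01_lip[OF v_C1] by blast
  obtain Lt where Lt: "Lt \<ge> 0"
    "\<forall>s\<in>{0..1}. \<forall>t\<in>{0..1}. \<forall>t'\<in>{0..1}. \<bar>l s t (\<phi> t) - l s t' (\<phi> t')\<bar> \<le> Lt * \<bar>t - t'\<bar>"
    using L_props(1)[OF kernel B Lp] by blast
  obtain CB where CB: "CB \<ge> 0" "\<forall>s\<in>{0..1}. \<forall>s'\<in>{0..1}. \<forall>t\<in>{0..1}. \<forall>t'\<in>{0..1}.
        ((t \<le> s \<and> t \<le> s' \<and> t' \<le> s \<and> t' \<le> s') \<or> (s \<le> t \<and> s' \<le> t \<and> s \<le> t' \<and> s' \<le> t')) \<longrightarrow>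
        \<bar>l s t (\<phi> t) - l s' t (\<phi> t) - (l s t' (\<phi> t') - l s' t' (\<phi> t'))\<bar> \<le> CB * \<bar>s - s'\<bar> * \<bar>t - t'\<bar>"
    using L_props(2)[OF kernel B Lp] by blast
  define C1 where "C1 = (CB + 4 * Lt) * Lv"
  have key: "\<forall>x\<in>{0..1}. \<forall>y\<in>{0..1}. \<bar>x - y\<bar> \<le> 1 / real n \<longrightarrow>
      \<bar>Kmd l \<phi> (n*p) (IQn n p v) x - Kmd l \<phi> (n*p) (IQn n p v) y\<bar> \<le> C1 * (1 / real n) ^ 3"
    if "n \<ge> 1" "p \<ge> 1" for n p
    using part1_core[where l=l and \<phi>=\<phi> and v=v, OF that Lv Lt CB] unfolding C1_def by blast
  have P1: "\<bar>IQn n p (Kmd l \<phi> (n * p) (IQn n p v)) s\<bar> \<le> C1 * (1 / real n) ^ 3"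
    if "n \<ge> 1" "p \<ge> 1" "s \<in> {0..1}" for n p s
    using IQn_small[OF that(1,2) _ _ key[OF that(1,2)]] that(3) by auto
  have P2: "\<bar>Kmd l \<phi> (n * p) (IQn n p (Kmd l \<phi> (n * p) (IQn n p v))) s\<bar> \<le> (Lt * C1) * (1 / real n) ^ 4"
    if "n \<ge> 1" "p \<ge> 1" "s \<in> {0..1}" for n p s
  proof -
    have "\<bar>Kmd l \<phi> (n * p) (IQn n p (Kmd l \<phi> (n * p) (IQn n p v))) s\<bar> \<le> Lt * (C1 * (1 / real n) ^ 3) * (1 / real n)"
      by (rule part2_core[where l=l and \<phi>=\<phi>, OF that(1,2) Lt key[OF that(1,2)] that(3)])
    also have "\<dots> = (Lt * C1) * (1 / real n) ^ 4" by (simp add: power_divide field_simps eval_nat_numeral)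
    finally show ?thesis .
  qed
  show ?thesis
    using P1 P2 by blast
qed


end
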